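(* Let $n>f\ge0$, $b=\frac{f}{n-f}$, let $F_2$ be a $(b,\rho)$-robust summation and $F_1$ an $(f,\nu)$-robust aggregation rule. For inputs $x_1,\dots,x_n\in\mathbb{R}^d$ define, for each $i\in[n]$, $$y_i=x_i-F_2\Big(\big(\tfrac{1}{n-f},\,x_i-x_j\big)_{j\in[n]}\Big),$$ and define the aggregation rule $\tilde F(x_1,\dots,x_n):=F_1(y_1,\dots,y_n)$. Then $\tilde F$ is an $(f,\tilde\nu)$-robust aggregation rule with $$\tilde\nu=\delta(1+\nu),\qquad \delta:=\frac{2\rho f}{n-f}.$$
   Context: $(f,\nu)$-robust aggregation rule: a map $F:\mathbb{R}^{d\times n}\to\mathbb{R}^d$ such that for all $x_1,\dots,x_n\in\mathbb{R}^d$ and every $S\subset[n]$ with $|S|=n-f$, $\|F(x_1,\dots,x_n)-\bar x_S\|^2\le \nu\frac{1}{|S|}\sum_{i\in S}\|x_i-\bar x_S\|^2$, where $\bar x_S=\frac{1}{|S|}\sum_{i\in S}x_i$. $(b,\rho)$-robust summation: a map $F:(\mathbb{R}_+\times\mathbb{R}^d)^n\to\mathbb{R}^d$ such that for all vectors $z_1,\dots,z_n\in\mathbb{R}^d$, all weights $\omega_1,\dots,\omega_n\ge0$ and every $S\subset[n]$ with $\sum_{i\in[n]\setminus S}\omega_i\le b$, one has $\big\|F((\omega_i,z_i)_{i\in[n]})-\sum_{i\in S}\omega_iz_i\big\|^2\le\rho b\sum_{i\in S}\omega_i\|z_i\|^2$. *)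

theory Defs
  imports "HOL-Analysis.Analysis"
begin

text \<open>Inputs x_1..x_n are represented as functions nat => 'a, indices 0..n-1 (i.e. [n] = {..<n}).
  Only the values at indices below n are meaningful.\<close>

definition avg_on :: "nat set \<Rightarrow> (nat \<Rightarrow> 'a::real_vector) \<Rightarrow> 'a" where
  "avg_on S x = (1 / real (card S)) *\<^sub>R (\<Sum>i\<in>S. x i)"

definition robust_aggregation ::
  "nat \<Rightarrow> nat \<Rightarrow> real \<Rightarrow> ((nat \<Rightarrow> 'a::real_inner) \<Rightarrow> 'a) \<Rightarrow> bool" where
  "robust_aggregation n f \<nu> F \<longleftrightarrow>
     (\<forall>x S. S \<subseteq> {..<n} \<and> card S = n - f \<longrightarrow>
        (norm (F x - avg_on S x))\<^sup>2
          \<le> \<nu> * ((1 / real (card S)) * (\<Sum>i\<in>S. (norm (x i - avg_on S x))\<^sup>2)))"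

definition robust_summation ::
  "nat \<Rightarrow> real \<Rightarrow> real \<Rightarrow> ((nat \<Rightarrow> real \<times> 'a::real_inner) \<Rightarrow> 'a) \<Rightarrow> bool" where
  "robust_summation n b \<rho> F \<longleftrightarrow>
     (\<forall>\<omega> z S. (\<forall>i<n. \<omega> i \<ge> 0) \<and> S \<subseteq> {..<n} \<and> (\<Sum>i\<in>{..<n} - S. \<omega> i) \<le> b \<longrightarrow>
        (norm (F (\<lambda>i. (\<omega> i, z i)) - (\<Sum>i\<in>S. \<omega> i *\<^sub>R z i)))\<^sup>2
          \<le> \<rho> * b * (\<Sum>i\<in>S. \<omega> i * (norm (z i))\<^sup>2))"

end

theory Submission
  imports Defs
begin

lemma var_id:
  fixes u :: "nat \<Rightarrow> 'a::real_inner"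
  assumes "finite S" "card S > 0"
  shows "(1 / real (card S)) * (\<Sum>i\<in>S. (norm (u i - avg_on S u))\<^sup>2)
       = (1 / real (card S)) * (\<Sum>i\<in>S. (norm (u i))\<^sup>2) - (norm (avg_on S u))\<^sup>2"
proof -
  define c where "c = avg_on S u"
  define k where "k = real (card S)"
  have k: "k > 0" using assms k_def by simp
  have su: "(\<Sum>i\<in>S. u i) = k *\<^sub>R c"
    using k unfolding c_def avg_on_def k_def by simp
  have "(\<Sum>i\<in>S. (norm (u i - c))\<^sup>2)
      = (\<Sum>i\<in>S. (norm (u i))\<^sup>2 - 2 * (u i \<bullet> c) + (norm c)\<^sup>2)"
    by (rule sum.cong) (auto simp: power2_norm_eq_inner inner_diff inner_commute)
  also have "\<dots> = (\<Sum>i\<in>S. (norm (u i))\<^sup>2) - 2 * ((\<Sum>i\<in>S. u i) \<bullet> c) + k * (norm c)\<^sup>2"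
    by (simp add: sum.distrib sum_subtractf sum_distrib_left inner_sum_left k_def)
  also have "\<dots> = (\<Sum>i\<in>S. (norm (u i))\<^sup>2) - k * (norm c)\<^sup>2"
    by (simp add: su power2_norm_eq_inner)
  finally show ?thesis using k unfolding c_def[symmetric] k_def[symmetric]
    by (simp add: field_simps)
qed

theorem mainTheorem4:
  fixes n f :: nat and \<rho> \<nu> :: real
    and F1 :: "(nat \<Rightarrow> 'a::euclidean_space) \<Rightarrow> 'a"
    and F2 :: "(nat \<Rightarrow> real \<times> 'a) \<Rightarrow> 'a"
  assumes "f < n"
    and "robust_summation n (real f / real (n - f)) \<rho> F2"
    and "robust_aggregation n f \<nu> F1"
  shows "robust_aggregation n f ((2 * \<rho> * real f / real (n - f)) * (1 + \<nu>))
           (\<lambda>x. F1 (\<lambda>i. x i - F2 (\<lambda>j. (1 / real (n - f), x i - x j))))"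
  unfolding robust_aggregation_def
proof (intro allI impI)
  fix x :: "nat \<Rightarrow> 'a" and S
  assume HS: "S \<subseteq> {..<n} \<and> card S = n - f"
  define m where "m = real (n - f)"
  define b where "b = real f / real (n - f)"
  have m: "m > 0" using assms(1) m_def by simp
  have fin: "finite S" using HS finite_subset by blast
  have cS: "real (card S) = m" using HS m_def by simp
  have cpos: "card S > 0" using HS assms(1) by simp
  define xb where "xb = avg_on S x"
  define s2 where "s2 = (1 / m) * (\<Sum>i\<in>S. (norm (x i - xb))\<^sup>2)"
  define G where "G i = F2 (\<lambda>j. (1 / m, x i - x j))" for i
  define e where "e i = G i - (x i - xb)" for i
  have sumx: "(\<Sum>i\<in>S. x i) = m *\<^sub>R xb" using m cS unfolding xb_def avg_on_def by simp
  have cd: "card ({..<n} - S) = f" using HS assms(1) fin by (simp add: card_Diff_subset)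
  have F2b: "(norm (e i))\<^sup>2 \<le> \<rho> * b * (\<Sum>j\<in>S. (1/m) * (norm (x i - x j))\<^sup>2)" if "i \<in> S" for i
  proof -
    have 1: "(\<Sum>j\<in>{..<n} - S. 1/m) \<le> b" using cd unfolding b_def m_def by simp
    have 2: "(\<Sum>j\<in>S. (1/m) *\<^sub>R (x i - x j)) = x i - xb"
    proof -
      have "(\<Sum>j\<in>S. (1/m) *\<^sub>R (x i - x j)) = (1/m) *\<^sub>R (m *\<^sub>R x i - (\<Sum>j\<in>S. x j))"
        using cS by (simp add: scaleR_sum_right[symmetric] sum_subtractf sum_constant_scaleR)
      also have "\<dots> = x i - xb" using m by (simp add: sumx algebra_simps)
      finally show ?thesis .
    qed
    have "(norm (F2 (\<lambda>j. (1/m, x i - x j)) - (\<Sum>j\<in>S. (1/m) *\<^sub>R (x i - x j))))\<^sup>2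
          \<le> \<rho> * b * (\<Sum>j\<in>S. (1/m) * (norm (x i - x j))\<^sup>2)"
      using assms(2)[unfolded robust_summation_def b_def[symmetric], rule_format,
          of "\<lambda>_. 1/m" S "\<lambda>j. x i - x j"] 1 HS m by auto
    then show ?thesis unfolding 2 e_def G_def .
  qed
  have sq: "(\<Sum>j\<in>S. (1/m) * (norm (x i - x j))\<^sup>2) = (norm (x i - xb))\<^sup>2 + s2" for i
  proof -
    have av: "avg_on S (\<lambda>j. x i - x j) = x i - xb"
      using m cS unfolding avg_on_def xb_def by (simp add: sum_subtractf algebra_simps sum_constant_scaleR)
    have "(1/m) * (\<Sum>j\<in>S. (norm (x i - x j - (x i - xb)))\<^sup>2)
        = (1/m) * (\<Sum>j\<in>S. (norm (x i - x j))\<^sup>2) - (norm (x i - xb))\<^sup>2"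
      using var_id[OF fin cpos, of "\<lambda>j. x i - x j"] unfolding av cS .
    moreover have "(\<Sum>j\<in>S. (norm (x i - x j - (x i - xb)))\<^sup>2) = (\<Sum>j\<in>S. (norm (x j - xb))\<^sup>2)"
      by (rule sum.cong) (auto simp: norm_minus_commute)
    ultimately have "s2 = (1/m) * (\<Sum>j\<in>S. (norm (x i - x j))\<^sup>2) - (norm (x i - xb))\<^sup>2"
      unfolding s2_def by simp
    then show ?thesis by (simp add: sum_divide_distrib[symmetric])
  qed
  define E where "E = (1/m) * (\<Sum>i\<in>S. (norm (e i))\<^sup>2)"
  have Eb: "E \<le> 2 * \<rho> * b * s2"
  proof -
    have "(\<Sum>i\<in>S. (norm (e i))\<^sup>2) \<le> (\<Sum>i\<in>S. \<rho> * b * ((norm (x i - xb))\<^sup>2 + s2))"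
      using F2b sq by (intro sum_mono) auto
    also have "\<dots> = \<rho> * b * ((\<Sum>i\<in>S. (norm (x i - xb))\<^sup>2) + m * s2)"
      using cS by (simp add: sum_distrib_left[symmetric] sum.distrib)
    also have "\<dots> = \<rho> * b * (2 * m * s2)" using m unfolding s2_def by simp
    finally show ?thesis using m unfolding E_def by (simp add: field_simps)
  qed
  define y where "y i = x i - F2 (\<lambda>j. (1 / real (n - f), x i - x j))" for i
  have yS: "y i = xb - e i" if "i \<in> S" for i unfolding y_def e_def G_def m_def by simp
  define eb where "eb = avg_on S e"
  have yb: "avg_on S y = xb - eb"
  proof -
    have "(\<Sum>i\<in>S. y i) = (\<Sum>i\<in>S. xb - e i)" using yS by (rule sum.cong[OF refl])
    also have "\<dots> = m *\<^sub>R xb - (\<Sum>i\<in>S. e i)"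
      using cS by (simp add: sum_subtractf sum_constant_scaleR)
    finally have "(1/m) *\<^sub>R (\<Sum>i\<in>S. y i) = xb - (1/m) *\<^sub>R (\<Sum>i\<in>S. e i)"
      using m by (simp add: scaleR_diff_right)
    then show ?thesis using cS unfolding avg_on_def eb_def by simp
  qed
  define V where "V = (1/m) * (\<Sum>i\<in>S. (norm (e i - eb))\<^sup>2)"
  have VE: "V = E - (norm eb)\<^sup>2" using var_id[OF fin cpos, of e] unfolding V_def E_def eb_def cS .
  have V0: "V \<ge> 0" using m unfolding V_def by (simp add: sum_nonneg)
  have Vy: "(1 / real (card S)) * (\<Sum>i\<in>S. (norm (y i - avg_on S y))\<^sup>2) = V"
  proof -
    have "(\<Sum>i\<in>S. (norm (y i - avg_on S y))\<^sup>2) = (\<Sum>i\<in>S. (norm (e i - eb))\<^sup>2)"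
      by (rule sum.cong) (auto simp: yS yb norm_minus_commute)
    then show ?thesis unfolding V_def cS by simp
  qed
  define a where "a = F1 y - (xb - eb)"
  have A: "(norm a)\<^sup>2 \<le> \<nu> * V"
    using assms(3)[unfolded robust_aggregation_def, rule_format, of S y] HS Vy
    unfolding a_def yb by (metis (no_types, lifting) times_divide_eq_right)
  have X: "0 \<le> \<nu> * s2"
  proof -
    have "(norm (F1 x - xb))\<^sup>2 \<le> \<nu> * s2"
      using assms(3)[unfolded robust_aggregation_def, rule_format, of S x] HS
      unfolding xb_def s2_def cS by simp
    then show ?thesis by (meson order_trans zero_le_power2)
  qed
  have s20: "s2 \<ge> 0" using m unfolding s2_def by (simp add: sum_nonneg)
  have goal: "(norm (a - eb))\<^sup>2 \<le> 2 * \<rho> * b * (1 + \<nu>) * s2"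
  proof (cases "\<nu> > 0")
    case True
    have key: "\<nu> * (norm (a - eb))\<^sup>2 \<le> (1 + \<nu>) * (norm a)\<^sup>2 + \<nu> * (1 + \<nu>) * (norm eb)\<^sup>2"
    proof -
      have h1: "(norm (a + \<nu> *\<^sub>R eb))\<^sup>2 = a \<bullet> a + 2 * \<nu> * (a \<bullet> eb) + \<nu> * \<nu> * (eb \<bullet> eb)"
        by (simp add: power2_norm_eq_inner inner_add inner_commute algebra_simps)
      have h2: "(norm (a - eb))\<^sup>2 = a \<bullet> a - 2 * (a \<bullet> eb) + eb \<bullet> eb"
        by (simp add: power2_norm_eq_inner inner_diff inner_commute algebra_simps)
      have h3: "(norm a)\<^sup>2 = a \<bullet> a" "(norm eb)\<^sup>2 = eb \<bullet> eb" by (simp_all add: power2_norm_eq_inner)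
      have "(1 + \<nu>) * (norm a)\<^sup>2 + \<nu> * (1 + \<nu>) * (norm eb)\<^sup>2 - \<nu> * (norm (a - eb))\<^sup>2
          = (norm (a + \<nu> *\<^sub>R eb))\<^sup>2"
        unfolding h1 h2 h3 by (simp add: algebra_simps)
      moreover have "0 \<le> (norm (a + \<nu> *\<^sub>R eb))\<^sup>2" by simp
      ultimately show ?thesis by linarith
    qed
    also have "\<dots> \<le> (1 + \<nu>) * (\<nu> * V) + \<nu> * (1 + \<nu>) * (norm eb)\<^sup>2"
      using A True by (intro add_right_mono mult_left_mono) auto
    also have "\<dots> = \<nu> * ((1 + \<nu>) * E)" by (simp add: VE algebra_simps)
    finally have "(norm (a - eb))\<^sup>2 \<le> (1 + \<nu>) * E" using True by simp
    also have "\<dots> \<le> (1 + \<nu>) * (2 * \<rho> * b * s2)" using Eb True by (intro mult_left_mono) auto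
    finally show ?thesis by (simp add: algebra_simps)
  next
    case False
    have "\<nu> * V \<le> 0" using False V0 by (simp add: mult_nonpos_nonneg)
    then have "norm a = 0" using A by (smt (verit) zero_le_power2 power_eq_0_iff)
    then have a0: "a = 0" by simp
    have ebE: "(norm eb)\<^sup>2 \<le> E" using VE V0 by simp
    show ?thesis
    proof (cases "\<nu> = 0")
      case True
      then show ?thesis using a0 ebE Eb by simp
    next
      case f2: False
      then have "\<nu> < 0" using False by simp
      then have "s2 = 0" using X s20 by (smt (verit) mult_neg_pos)
      then have "(norm eb)\<^sup>2 \<le> 0" using ebE Eb by (metis mult_zero_right order_trans)
      then have "eb = 0" by (smt (verit) zero_le_power2 power_eq_0_iff norm_eq_zero)
      then show ?thesis using a0 \<open>s2 = 0\<close> by simp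
    qed
  qed
  have lhs: "F1 (\<lambda>i. x i - F2 (\<lambda>j. (1 / real (n - f), x i - x j))) - avg_on S x = a - eb"
    unfolding a_def xb_def y_def[abs_def] by simp
  show "(norm (F1 (\<lambda>i. x i - F2 (\<lambda>j. (1 / real (n - f), x i - x j))) - avg_on S x))\<^sup>2
        \<le> 2 * \<rho> * real f / real (n - f) * (1 + \<nu>) *
          (1 / real (card S) * (\<Sum>i\<in>S. (norm (x i - avg_on S x))\<^sup>2))"
    unfolding lhs using goal unfolding s2_def b_def cS m_def xb_def by (simp add: algebra_simps)
qed

end
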